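(* Let $F$ be a distribution on $[0,\infty)$ with a long-tailed density $f$ on $[\widehat x,\infty)$. Suppose one of the following holds: (i) there exists $c>0$ such that $f(y)\ge cf(x)$ for all $y\in(x,2x]$ and all sufficiently large $x$; (ii) $g(x)=-\ln f(x)$ is concave for $x\ge x_0$ for some $x_0$, and for some function $h(x)\to\infty$ one has $f(x+t)\sim f(x)$ as $x\to\infty$ uniformly in $|t|\le h(x)$ and $x\,e^{-g(h(x))}\to0$ as $x\to\infty$. Then $f$ is subexponential, i.e. $F\in\mathcal S_{ac}$.
   Context: A distribution $F$ has a density $f$ on $[\widehat x,\infty)$ if $F(B)=\int_Bf(y)dy$ for Borel $B\subseteq[\widehat x,\infty)$. Such a density is long-tailed if it is bounded on $[\widehat x,\infty)$, $f(x)>0$ for all large $x$, and $f(x+t)\sim f(x)$ as $x\to\infty$ uniformly in $t\in[0,1]$. $F\in\mathcal S_{ac}$ if $f$ is long-tailed and $2\int_0^{\widehat x}f(x-y)F(dy)+\int_{\widehat x}^{x-\widehat x}f(x-y)f(y)dy\sim2f(x)$ as $x\to\infty$. *)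

theory Defs
  imports "HOL-Analysis.Analysis" "HOL-Probability.Probability" "HOL-Library.Landau_Symbols"
begin

definition distribution_on_nonneg :: "real measure \<Rightarrow> bool" where
  "distribution_on_nonneg F \<longleftrightarrow>
     prob_space F \<and> sets F = sets borel \<and> emeasure F {..<0} = 0"

definition has_density_on :: "real measure \<Rightarrow> (real \<Rightarrow> real) \<Rightarrow> real \<Rightarrow> bool" where
  "has_density_on F f xh \<longleftrightarrow>
     f \<in> borel_measurable (restrict_space borel {xh..}) \<and>
     (\<forall>y\<ge>xh. 0 \<le> f y) \<and>
     (\<forall>B\<in>sets borel. B \<subseteq> {xh..} \<longrightarrow>
        emeasure F B = (\<integral>\<^sup>+ y\<in>B. ennreal (f y) \<partial>lborel))"

definition long_tailed_density :: "(real \<Rightarrow> real) \<Rightarrow> real \<Rightarrow> bool" where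
  "long_tailed_density f xh \<longleftrightarrow>
     (\<exists>M. \<forall>x\<ge>xh. \<bar>f x\<bar> \<le> M) \<and>
     (\<forall>\<^sub>F x in at_top. f x > 0) \<and>
     (\<forall>\<epsilon>>0. \<forall>\<^sub>F x in at_top. \<forall>t\<in>{0..1}. \<bar>f (x + t) / f x - 1\<bar> \<le> \<epsilon>)"

definition S_ac :: "real measure \<Rightarrow> (real \<Rightarrow> real) \<Rightarrow> real \<Rightarrow> bool" where
  "S_ac F f xh \<longleftrightarrow>
     long_tailed_density f xh \<and>
     (\<lambda>x. 2 * (\<integral>y\<in>{0..xh}. f (x - y) \<partial>F)
            + (\<integral>y\<in>{xh..x - xh}. f (x - y) * f y \<partial>lborel))
       \<sim>[at_top] (\<lambda>x. 2 * f x)"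

end

theory Submission
  imports Defs
begin


lemma lt_mult:
  assumes lt: "long_tailed_density f xh" and d: "d > 0"
  shows "\<forall>\<^sub>F x in at_top. f x > 0 \<and> (\<forall>t\<in>{0..1}. (1-d)*f x \<le> f(x+t) \<and> f(x+t) \<le> (1+d) * f x)"
proof -
  have p: "\<forall>\<^sub>F x in at_top. f x > 0" and r: "\<forall>\<^sub>F x in at_top. \<forall>t\<in>{0..1}. \<bar>f (x + t) / f x - 1\<bar> \<le> d"
    using lt d unfolding long_tailed_density_def by auto
  show ?thesis using p r
  proof eventually_elim
    case (elim x)
    show ?case
    proof (intro conjI ballI)
      fix t :: real assume t: "t \<in> {0..1}"
      have "\<bar>f (x + t) / f x - 1\<bar> \<le> d" using elim t by auto
      hence "1 - d \<le> f (x+t) / f x" "f (x+t)/f x \<le> 1 + d" by auto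
      thus "(1-d)*f x \<le> f(x+t)" "f(x+t) \<le> (1+d) * f x" using elim(1) by (auto simp: field_simps)
    qed (use elim in auto)
  qed
qed

lemma lt_n:
  assumes lt: "long_tailed_density f xh" and nn: "\<forall>y\<ge>xh. 0 \<le> f y"
  shows "d > 0 \<Longrightarrow> \<forall>\<^sub>F x in at_top. f x > 0 \<and> (\<forall>t\<in>{0..real n}. (1-d)*f x \<le> f(x+t) \<and> f(x+t) \<le> (1+d) * f x)"
proof (induction n arbitrary: d)
  case 0
  from lt_mult[OF lt 0] show ?case
  proof eventually_elim
    case (elim x)
    have "0 \<le> d * f x" using elim 0 by simp
    thus ?case using elim by (auto simp: algebra_simps)
  qed
next
  case (Suc n)
  define e where "e = min 1 (d/3)"
  have e: "e > 0" "e \<le> 1" "e \<le> d/3" using Suc.prems by (auto simp: e_def)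
  from Suc.IH[OF e(1)] obtain N1 where N1: "\<And>x. x \<ge> N1 \<Longrightarrow> f x > 0 \<and> (\<forall>t\<in>{0..real n}. (1-e)*f x \<le> f(x+t) \<and> f(x+t) \<le> (1+e) * f x)"
    by (auto simp: eventually_at_top_linorder)
  from lt_mult[OF lt e(1)] obtain N2 where N2: "\<And>x. x \<ge> N2 \<Longrightarrow> f x > 0 \<and> (\<forall>t\<in>{0..1}. (1-e)*f x \<le> f(x+t) \<and> f(x+t) \<le> (1+e) * f x)"
    by (auto simp: eventually_at_top_linorder)
  show ?case unfolding eventually_at_top_linorder
  proof (intro exI[of _ "max N1 N2"] allI impI)
    fix x assume x: "x \<ge> max N1 N2"
    have fx: "f x > 0" using N1[of x] x by auto
    have "(1-d)*f x \<le> f(x+t) \<and> f(x+t) \<le> (1+d) * f x" if t: "t \<in> {0..real (Suc n)}" for t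
    proof -
    have "(1-d)*f x \<le> f(x+t) \<and> f(x+t) \<le> (1+d) * f x"
    proof (cases "t \<le> real n")
      case True
      hence "(1-e)*f x \<le> f(x+t) \<and> f(x+t) \<le> (1+e) * f x" using N1[of x] x t by auto
      moreover have "(1-d)*f x \<le> (1-e)*f x" "(1+e)*f x \<le> (1+d)*f x" using fx e Suc.prems
        by (auto intro!: mult_right_mono)
      ultimately show ?thesis by linarith
    next
      case False
      define s where "s = t - real n"
      have s: "s \<in> {0..1}" using False t by (auto simp: s_def)
      have a: "(1-e)*f x \<le> f(x+real n) \<and> f(x+real n) \<le> (1+e) * f x" using N1[of x] x by auto
      have b: "(1-e)*f (x + real n) \<le> f(x+real n+s) \<and> f(x+real n+s) \<le> (1+e) * f (x+real n)"
        using N2[of "x + real n"] x s by auto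
      have xt: "x + t = x + real n + s" by (simp add: s_def)
      have "(1-d)*f x \<le> (1-e)*((1-e)*f x)"
      proof -
        have "(1-e)*(1-e) = 1 - 2*e + e*e" by (simp add: algebra_simps)
        moreover have "e*e \<ge> 0" by simp
        ultimately have "(1-e)*(1-e) \<ge> 1 - d" using e by linarith
        thus ?thesis using fx by (simp add: mult.assoc[symmetric] mult_right_mono)
      qed
      also have "\<dots> \<le> (1-e)*f(x+real n)" using a e by (intro mult_left_mono) auto
      also have "\<dots> \<le> f(x+t)" using b unfolding xt by simp
      finally have l: "(1-d)*f x \<le> f(x+t)" .
      have "f(x+t) \<le> (1+e) * f (x+real n)" using b unfolding xt by simp
      also have "\<dots> \<le> (1+e)*((1+e)*f x)" using a e by (intro mult_left_mono) auto
      also have "\<dots> \<le> (1+d)*f x"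
      proof -
        have "(1+e)*(1+e) = 1 + 2*e + e*e" by (simp add: algebra_simps)
        moreover have "e*e \<le> e*1" using e by (intro mult_left_mono) auto
        ultimately have "(1+e)*(1+e) \<le> 1 + d" using e by linarith
        thus ?thesis using fx by (simp add: mult.assoc[symmetric] mult_right_mono)
      qed
      finally show ?thesis using l by simp
    qed
    thus ?thesis by auto
    qed
    thus "f x > 0 \<and> (\<forall>t\<in>{0..real (Suc n)}. (1-d)*f x \<le> f(x+t) \<and> f(x+t) \<le> (1+d) * f x)"
      using fx by auto
  qed
qed



lemma lt_back:
  assumes lt: "long_tailed_density f xh" and nn: "\<forall>y\<ge>xh. 0 \<le> f y" and K: "K \<ge> 0" and ep: "\<epsilon> > 0"
  shows "\<forall>\<^sub>F x in at_top. f x > 0 \<and> (\<forall>y\<in>{0..K}. (1-\<epsilon>)*f x \<le> f(x-y) \<and> f(x-y) \<le> (1+\<epsilon>)*f x)"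
proof -
  define d where "d = \<epsilon>/(1+\<epsilon>)"
  have d: "d > 0" "d < 1" using ep by (auto simp: d_def field_simps)
  define n where "n = nat \<lceil>K\<rceil>"
  have Kn: "K \<le> real n" unfolding n_def by linarith
  from lt_n[OF lt nn d(1), of n] obtain N where N: "\<And>x. x \<ge> N \<Longrightarrow> f x > 0 \<and> (\<forall>t\<in>{0..real n}. (1-d)*f x \<le> f(x+t) \<and> f(x+t) \<le> (1+d) * f x)"
    by (auto simp: eventually_at_top_linorder)
  show ?thesis unfolding eventually_at_top_linorder
  proof (intro exI[of _ "N + K"] allI impI)
    fix x assume x: "x \<ge> N + K"
    have fx: "f x > 0" using N[of x] x K by auto
    have "(1-\<epsilon>)*f x \<le> f(x-y) \<and> f(x-y) \<le> (1+\<epsilon>)*f x" if y: "y \<in> {0..K}" for y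
    proof -
      have z: "x - y \<ge> N" using x y by auto
      have fz: "f (x-y) > 0" using N[OF z] by auto
      have b: "(1-d)*f (x-y) \<le> f x" "f x \<le> (1+d) * f (x-y)"
        using N[OF z] y Kn by (auto dest!: bspec[of _ _ y])
      have e1: "1 - d = 1/(1+\<epsilon>)" using ep by (simp add: d_def field_simps)
      have "f (x-y) \<le> (1+\<epsilon>)*f x"
      proof -
        have "f (x-y) / (1+\<epsilon>) \<le> f x" using b(1) e1 by (simp add: field_simps)
        thus ?thesis using ep by (simp add: field_simps)
      qed
      moreover have "(1-\<epsilon>)*f x \<le> f(x-y)"
      proof -
        have c: "(1-\<epsilon>)*(1+d) \<le> 1" using ep unfolding d_def by (simp add: field_simps)
        have "(1-\<epsilon>)*f x \<le> (1-\<epsilon>)*((1+d)*f (x-y))" if "\<epsilon> \<le> 1"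
          using b(2) that by (intro mult_left_mono) auto
        also have "\<dots> = ((1-\<epsilon>)*(1+d))*f (x-y)" by simp
        also have "\<dots> \<le> 1 * f(x-y)" using c fz by (intro mult_right_mono) auto
        finally have "\<epsilon> \<le> 1 \<Longrightarrow> (1-\<epsilon>)*f x \<le> f(x-y)" by simp
        moreover have "\<epsilon> > 1 \<Longrightarrow> (1-\<epsilon>)*f x \<le> f(x-y)"
          using fx fz by (smt (verit) mult_nonpos_nonneg)
        ultimately show ?thesis by linarith
      qed
      ultimately show ?thesis by simp
    qed
    thus "f x > 0 \<and> (\<forall>y\<in>{0..K}. (1-\<epsilon>)*f x \<le> f(x-y) \<and> f(x-y) \<le> (1+\<epsilon>)*f x)" using fx by auto
  qed
qed



locale sac_setup =
  fixes F :: "real measure" and f :: "real \<Rightarrow> real" and xh :: real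
  assumes dist: "distribution_on_nonneg F" and xh: "0 \<le> xh"
    and dens: "has_density_on F f xh" and lt: "long_tailed_density f xh"
begin

lemma ps: "prob_space F" and sF: "sets F = sets borel" and neg0: "emeasure F {..<0} = 0"
  using dist unfolding distribution_on_nonneg_def by auto

lemma spF: "space F = UNIV"
  using sets_eq_imp_space_eq[OF sF] by simp

lemma nn: "\<forall>y\<ge>xh. 0 \<le> f y" using dens unfolding has_density_on_def by auto

lemma fmeas: "f \<in> borel_measurable (restrict_space borel {xh..})"
  using dens unfolding has_density_on_def by auto

lemma dens_eq: "B \<in> sets borel \<Longrightarrow> B \<subseteq> {xh..} \<Longrightarrow> emeasure F B = (\<integral>\<^sup>+ y\<in>B. ennreal (f y) \<partial>lborel)"
  using dens unfolding has_density_on_def by auto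

definition Mb where "Mb = max 0 (SOME M. \<forall>x\<ge>xh. \<bar>f x\<bar> \<le> M)"

lemma Mb: "\<And>x. x \<ge> xh \<Longrightarrow> \<bar>f x\<bar> \<le> Mb" "Mb \<ge> 0"
proof -
  have "\<exists>M. \<forall>x\<ge>xh. \<bar>f x\<bar> \<le> M" using lt unfolding long_tailed_density_def by auto
  from someI_ex[OF this] show "\<And>x. x \<ge> xh \<Longrightarrow> \<bar>f x\<bar> \<le> Mb" unfolding Mb_def by force
  show "Mb \<ge> 0" unfolding Mb_def by simp
qed

definition fb where "fb y = indicator {xh..} y *\<^sub>R f y"

lemma fb_meas[measurable]: "fb \<in> borel_measurable borel"
  using fmeas unfolding fb_def by (subst (asm) borel_measurable_restrict_space_iff) auto

lemma fb_eq: "y \<ge> xh \<Longrightarrow> fb y = f y" and fb_0: "y < xh \<Longrightarrow> fb y = 0"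
  by (auto simp: fb_def)

lemma fb_nn: "0 \<le> fb y" using nn by (auto simp: fb_def indicator_def)

lemma fb_le: "fb y \<le> Mb"
proof (cases "y \<ge> xh")
  case True thus ?thesis using Mb(1)[OF True] by (auto simp: fb_def)
qed (use Mb in \<open>auto simp: fb_def\<close>)

lemma nn_fb: "(\<integral>\<^sup>+ y. ennreal (fb y) \<partial>lborel) = emeasure F {xh..}"
proof -
  have "emeasure F {xh..} = (\<integral>\<^sup>+ y\<in>{xh..}. ennreal (f y) \<partial>lborel)" by (rule dens_eq) auto
  also have "\<dots> = (\<integral>\<^sup>+ y. ennreal (fb y) \<partial>lborel)"
    by (intro nn_integral_cong) (auto simp: fb_def indicator_def)
  finally show ?thesis by simp
qed

lemma fb_int: "integrable lborel fb"
proof (rule integrableI_nonneg)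
  show "AE x in lborel. 0 \<le> fb x" using fb_nn by auto
  have "emeasure F {xh..} < \<infinity>"
    using finite_measure.emeasure_finite[OF prob_space.finite_measure[OF ps], of "{xh..}"] by (simp add: less_top)
  thus "(\<integral>\<^sup>+ y. ennreal (fb y) \<partial>lborel) < \<infinity>" using nn_fb by simp
qed auto

definition q where "q = integral\<^sup>L lborel fb"

lemma q_meas: "q = measure F {xh..}"
proof -
  have "ennreal q = emeasure F {xh..}"
    unfolding q_def nn_fb[symmetric] using fb_int fb_nn by (subst nn_integral_eq_integral) auto
  thus ?thesis using fb_nn unfolding q_def
    by (metis Sigma_Algebra.measure_def enn2real_ennreal integral_nonneg_AE AE_I2)
qed

lemma q_nn: "q \<ge> 0" unfolding q_def using fb_nn by (simp add: integral_nonneg_AE)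

definition p0 where "p0 = measure F {0..xh}"

lemma single0: "emeasure F {xh} = 0"
proof -
  have "emeasure F {xh} = (\<integral>\<^sup>+ y\<in>{xh}. ennreal (f y) \<partial>lborel)" by (rule dens_eq) auto
  also have "\<dots> = (\<integral>\<^sup>+ (y::real). 0 \<partial>lborel)"
  proof (rule nn_integral_cong_AE)
    show "AE x in lborel. ennreal (f x) * indicator {xh} x = 0"
      using AE_lborel_singleton[of xh] by eventually_elim auto
  qed
  finally show ?thesis by simp
qed

lemma p0q: "p0 + q = 1"
proof -
  interpret prob_space F by (rule ps)
  have m: "A \<in> sets F" if "A \<in> sets borel" for A using that sF by simp
  have "measure F {..<0} = 0" using neg0 by (simp add: measure_def)
  have "1 = measure F UNIV" using prob_space spF by simp
  also have "UNIV = {..<0} \<union> ({0..xh} \<union> {xh<..})" using xh by auto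
  also have "measure F \<dots> = measure F {..<0} + measure F ({0..xh} \<union> {xh<..})"
    using xh by (intro finite_measure_Union m) auto
  also have "measure F ({0..xh} \<union> {xh<..}) = measure F {0..xh} + measure F {xh<..}"
    using xh by (intro finite_measure_Union m) auto
  also have "measure F {xh<..} = measure F {xh..}"
  proof -
    have "{xh..} = {xh} \<union> {xh<..}" by auto
    hence "measure F {xh..} = measure F {xh} + measure F {xh<..}"
      using finite_measure_Union[of "{xh}" "{xh<..}"] m by simp
    moreover have "measure F {xh} = 0" using single0 by (simp add: measure_def)
    ultimately show ?thesis by simp
  qed
  finally show ?thesis using \<open>measure F {..<0} = 0\<close> by (simp add: p0_def q_meas)
qed

lemma p0_nn: "p0 \<ge> 0" "p0 \<le> 1" unfolding p0_def using prob_space.prob_le_1[OF ps] by auto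

lemma q_le1: "q \<le> 1" using p0q p0_nn by linarith

end


lemma tendsto_by_eps:
  fixes g :: "real \<Rightarrow> real"
  assumes "\<And>\<epsilon>. \<epsilon> > 0 \<Longrightarrow> \<forall>\<^sub>F x in at_top. \<bar>g x - L\<bar> \<le> \<epsilon>"
  shows "(g \<longlongrightarrow> L) at_top"
proof (rule tendstoI)
  fix e :: real assume e: "e > 0"
  have "e/2 > 0" using e by simp
  from assms[OF this] show "\<forall>\<^sub>F x in at_top. dist (g x) L < e"
    by eventually_elim (use e in \<open>auto simp: dist_real_def\<close>)
qed

context sac_setup begin

lemma measF: "borel_measurable F = borel_measurable borel"
  by (rule measurable_cong_sets) (auto simp: sF)

definition I where "I a = (\<integral>y. indicator {..a} y * fb y \<partial>lborel)"
definition J where "J a = (\<integral>y. indicator {a<..} y * fb y \<partial>lborel)"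

lemma I_int: "integrable lborel (\<lambda>y. indicator A y * fb y)" if "A \<in> sets borel"
  using integrable_mult_indicator[of A lborel fb] fb_int that by simp

lemma IJ: "I a + J a = q"
proof -
  have "I a + J a = (\<integral>y. indicator {..a} y * fb y + indicator {a<..} y * fb y \<partial>lborel)"
    unfolding I_def J_def by (subst Bochner_Integration.integral_add) (auto intro!: I_int)
  also have "\<dots> = q" unfolding q_def
    by (intro Bochner_Integration.integral_cong) (auto simp: indicator_def)
  finally show ?thesis .
qed

lemma J_nn: "J a \<ge> 0" unfolding J_def using fb_nn by (intro integral_nonneg_AE) auto
lemma I_nn: "I a \<ge> 0" unfolding I_def using fb_nn by (intro integral_nonneg_AE) auto

lemma I_lim: "(I \<longlongrightarrow> q) at_top"
  unfolding I_def q_def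
proof (rule integral_dominated_convergence_at_top[where w=fb])
  show "AE x in lborel. ((\<lambda>i. indicator {..i} x * fb x) \<longlongrightarrow> fb x) at_top"
  proof (intro AE_I2)
    fix x :: real
    have "\<forall>\<^sub>F i in at_top. indicator {..i} x * fb x = fb x"
      unfolding eventually_at_top_linorder by (intro exI[of _ x]) auto
    thus "((\<lambda>i. indicator {..i} x * fb x) \<longlongrightarrow> fb x) at_top"
      by (rule tendsto_eventually)
  qed
  show "\<forall>\<^sub>F i in at_top. AE x in lborel. norm (indicator {..i} x * fb x) \<le> fb x"
    using fb_nn by (auto simp: indicator_def)
qed (auto simp: fb_int)

lemma tail_small: "\<epsilon> > 0 \<Longrightarrow> \<exists>a\<ge>xh. J a \<le> \<epsilon>"
proof -
  assume e: "\<epsilon> > 0"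
  from I_lim e have "\<forall>\<^sub>F a in at_top. dist (I a) q < \<epsilon>" by (rule tendstoD)
  then obtain N where N: "\<And>a. a \<ge> N \<Longrightarrow> dist (I a) q < \<epsilon>" by (auto simp: eventually_at_top_linorder)
  define a where "a = max N xh"
  have "J a = q - I a" using IJ[of a] by simp
  also have "\<dots> \<le> \<epsilon>" using N[of a] by (auto simp: a_def dist_real_def)
  finally show ?thesis by (intro exI[of _ a]) (auto simp: a_def)
qed

definition A where "A x = (\<integral>y\<in>{0..xh}. f (x - y) \<partial>F)"

lemma A_lim: "((\<lambda>x. A x / f x) \<longlongrightarrow> p0) at_top"
proof (rule tendsto_by_eps)
  fix \<epsilon> :: real assume e: "\<epsilon> > 0"
  interpret prob_space F by (rule ps)
  have setF: "{0..xh} \<in> sets F" using sF by simp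
  from lt_back[OF lt nn xh e] obtain N where N: "\<And>x. x \<ge> N \<Longrightarrow> f x > 0 \<and> (\<forall>y\<in>{0..xh}. (1-\<epsilon>)*f x \<le> f(x-y) \<and> f(x-y) \<le> (1+\<epsilon>)*f x)"
    by (auto simp: eventually_at_top_linorder)
  show "\<forall>\<^sub>F x in at_top. \<bar>A x / f x - p0\<bar> \<le> \<epsilon>" unfolding eventually_at_top_linorder
  proof (intro exI[of _ "max N (2*xh)"] allI impI)
    fix x assume x: "x \<ge> max N (2*xh)"
    have fx: "f x > 0" using N x by auto
    have Ax: "A x = (\<integral>y\<in>{0..xh}. fb (x - y) \<partial>F)"
      unfolding A_def using x by (intro set_lebesgue_integral_cong setF) (auto simp: fb_eq)
    have meas: "(\<lambda>y. fb (x - y)) \<in> borel_measurable F" unfolding measF by measurable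
    have int1: "set_integrable F {0..xh} (\<lambda>y. fb (x - y))"
      unfolding set_integrable_def
      by (rule integrableI_bounded_set_indicator[where B=Mb]) (auto simp: setF meas fb_nn fb_le abs_of_nonneg less_top[symmetric])
    have intc: "set_integrable F {0..xh} (\<lambda>y. c)" for c :: real
      unfolding set_integrable_def
      by (rule integrableI_bounded_set_indicator[where B="\<bar>c\<bar>"]) (auto simp: setF less_top[symmetric])
    have cst: "(\<integral>y\<in>{0..xh}. c \<partial>F) = p0 * c" for c :: real
      unfolding p0_def by (subst set_integral_const) (auto simp: setF)
    have "(\<integral>y\<in>{0..xh}. (1-\<epsilon>)*f x \<partial>F) \<le> A x"
      unfolding Ax using N[of x] x by (intro set_integral_mono int1 intc) (auto simp: fb_eq)
    hence l: "p0 * ((1-\<epsilon>)*f x) \<le> A x" by (simp add: cst mult_ac)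
    have "A x \<le> (\<integral>y\<in>{0..xh}. (1+\<epsilon>)*f x \<partial>F)"
      unfolding Ax using N[of x] x by (intro set_integral_mono int1 intc) (auto simp: fb_eq)
    hence u: "A x \<le> p0 * ((1+\<epsilon>)*f x)" by (simp add: cst mult_ac)
    have b1: "p0 * (1-\<epsilon>) \<le> A x / f x" using l fx by (auto simp: field_simps)
    have b2: "A x / f x \<le> p0 * (1+\<epsilon>)" using u fx by (auto simp: field_simps)
    have e1: "p0*(1-\<epsilon>) = p0 - \<epsilon>*p0" and e2: "p0*(1+\<epsilon>) = p0+\<epsilon>*p0" by (simp_all add: algebra_simps)
    have e3: "\<epsilon>*p0 \<le> \<epsilon>" using p0_nn e by (simp add: mult_left_le)
    have "- \<epsilon> \<le> A x / f x - p0" using b1 e1 e3 by linarith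
    moreover have "A x / f x - p0 \<le> \<epsilon>" using b2 e2 e3 by linarith
    ultimately show "\<bar>A x / f x - p0\<bar> \<le> \<epsilon>" by (simp add: abs_le_iff)
  qed
qed

end


context sac_setup begin

definition G where "G x y = fb (x - y) * fb y"

lemma G_meas[measurable]: "G x \<in> borel_measurable borel" unfolding G_def by measurable

lemma G_nn: "G x y \<ge> 0" unfolding G_def using fb_nn by simp

lemma G_le: "G x y \<le> Mb * fb y" unfolding G_def using fb_nn fb_le by (intro mult_right_mono) auto

lemma G_int: "integrable lborel (\<lambda>y. indicator S y * G x y)" if "S \<in> sets borel"
proof (rule Bochner_Integration.integrable_bound[where f="\<lambda>y. Mb * fb y"])
  show "integrable lborel (\<lambda>y. Mb * fb y)" using fb_int by simp
  show "(\<lambda>y. indicator S y * G x y) \<in> borel_measurable lborel" using that by measurable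
  show "AE y in lborel. norm (indicator S y * G x y) \<le> norm (Mb * fb y)"
    using G_nn G_le fb_nn Mb(2) by (auto simp: indicator_def abs_mult)
qed

lemma G_int': "integrable lborel (G x)"
  using G_int[of UNIV x] by simp

lemma G_sym: "G x (x - y) = G x y" unfolding G_def by simp

definition H where "H x = (\<integral>y. indicator {..x/2} y * G x y \<partial>lborel)"

definition B where "B x = (\<integral>y\<in>{xh..x - xh}. f (x - y) * f y \<partial>lborel)"

lemma B_eq: "B x = 2 * H x"
proof -
  have "B x = (\<integral>y. G x y \<partial>lborel)"
    unfolding B_def set_lebesgue_integral_def
    by (intro Bochner_Integration.integral_cong) (auto simp: G_def fb_def indicator_def)
  also have "\<dots> = (\<integral>y. indicator {..x/2} y * G x y + indicator {x/2<..} y * G x y \<partial>lborel)"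
    by (intro Bochner_Integration.integral_cong) (auto simp: indicator_def)
  also have "\<dots> = H x + (\<integral>y. indicator {x/2<..} y * G x y \<partial>lborel)"
    unfolding H_def by (intro Bochner_Integration.integral_add G_int) auto
  also have "(\<integral>y. indicator {x/2<..} y * G x y \<partial>lborel) = (\<integral>y. indicator {x/2<..} (x + (-1)*y) * G x (x + (-1)*y) \<partial>lborel)"
    using lborel_integral_real_affine[of "-1" "\<lambda>y. indicator {x/2<..} y * G x y" x] by simp
  also have "\<dots> = (\<integral>y. indicator {..<x/2} y * G x y \<partial>lborel)"
    using G_sym[of x] by (intro Bochner_Integration.integral_cong) (auto simp: indicator_def)
  also have "\<dots> = H x"
    unfolding H_def
  proof (rule integral_cong_AE)
    show "AE y in lborel. indicator {..<x/2} y * G x y = indicator {..x/2} y * G x y"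
      using AE_lborel_singleton[of "x/2"] by eventually_elim (auto simp: indicator_def)
  qed auto
  finally show ?thesis by simp
qed

lemma B_lim:
  assumes "((\<lambda>x. H x / f x) \<longlongrightarrow> q) at_top"
  shows "((\<lambda>x. B x / f x) \<longlongrightarrow> 2*q) at_top"
  using tendsto_mult_left[OF assms, of 2] by (simp add: B_eq)

end


context sac_setup begin

lemma H_lim_i:
  assumes c: "c > 0" and ev: "\<forall>\<^sub>F x in at_top. \<forall>y\<in>{x<..2 * x}. f y \<ge> c * f x"
  shows "((\<lambda>x. H x / f x) \<longlongrightarrow> q) at_top"
proof (rule tendsto_by_eps)
  fix \<epsilon> :: real assume ep: "\<epsilon> > 0"
  define e where "e = min (1/2) (\<epsilon>/2)"
  have e: "e > 0" "e \<le> 1/2" "2*e \<le> \<epsilon>" using ep by (auto simp: e_def)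
  define c1 where "c1 = min c 1"
  have c1: "c1 > 0" "c1 \<le> 1" "c1 \<le> c" using c by (auto simp: c1_def)
  obtain a where a: "a \<ge> xh" "J a \<le> e * c1" using tail_small[of "e*c1"] e c1 by auto
  have a0: "a \<ge> 0" using a xh by simp
  from lt_back[OF lt nn a0 e(1)] obtain N where N: "\<And>x. x \<ge> N \<Longrightarrow> f x > 0 \<and> (\<forall>y\<in>{0..a}. (1-e)*f x \<le> f(x-y) \<and> f(x-y) \<le> (1+e)*f x)"
    by (auto simp: eventually_at_top_linorder)
  from ev obtain N1 where N1: "\<And>x. x \<ge> N1 \<Longrightarrow> \<forall>y\<in>{x<..2 * x}. f y \<ge> c * f x"
    by (auto simp: eventually_at_top_linorder)
  show "\<forall>\<^sub>F x in at_top. \<bar>H x / f x - q\<bar> \<le> \<epsilon>" unfolding eventually_at_top_linorder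
  proof (intro exI[of _ "max N (max (2*a) (2*N1))"] allI impI)
    fix x assume x: "x \<ge> max N (max (2*a) (2*N1))"
    have fx: "f x > 0" using N x by auto
    have Nx: "\<forall>y\<in>{0..a}. (1-e)*f x \<le> f(x-y) \<and> f(x-y) \<le> (1+e)*f x" using N x by auto
    have lo: "(1-e)*f x * (indicator {..a} y * fb y) \<le> indicator {..x/2} y * G x y" for y
    proof (cases "xh \<le> y \<and> y \<le> a")
      case True
      have "(1-e)*f x \<le> fb (x - y)" using Nx True xh x by (auto simp: fb_eq)
      hence "(1-e)*f x * fb y \<le> fb (x - y) * fb y" using fb_nn by (intro mult_right_mono) auto
      thus ?thesis using True x by (auto simp: G_def)
    next
      case False
      hence "indicator {..a} y * fb y = 0" by (auto simp: fb_0 indicator_def)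
      thus ?thesis using G_nn by (simp add: indicator_def)
    qed
    have up: "indicator {..x/2} y * G x y \<le> (1+e)*f x * (indicator {..a} y * fb y) + f x / c * (indicator {a<..} y * fb y)" for y
    proof -
      consider "y < xh" | "xh \<le> y" "y \<le> a" | "a < y" "y \<le> x/2" | "y > x/2" by linarith
      thus ?thesis
      proof cases
        case 1 thus ?thesis by (simp add: G_def fb_0)
      next
        case 2
        have "fb (x - y) \<le> (1+e)*f x" using Nx 2 xh x by (auto simp: fb_eq)
        hence "fb (x - y) * fb y \<le> (1+e)*f x * fb y" using fb_nn by (intro mult_right_mono) auto
        thus ?thesis using 2 x by (auto simp: G_def)
      next
        case 3
        have z: "x - y \<ge> N1" "x \<in> {x - y<..2*(x-y)}" using 3 x a0 by auto
        have "c * f (x - y) \<le> f x" using N1[OF z(1)] z(2) by auto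
        hence "f (x - y) \<le> f x / c" using c by (simp add: field_simps)
        moreover have "fb (x - y) = f (x - y)" using 3 x a by (intro fb_eq) auto
        ultimately have "fb (x - y) * fb y \<le> f x / c * fb y" using fb_nn by (intro mult_right_mono) auto
        moreover have "0 \<le> (1+e)*f x * (indicator {..a} y * fb y)" using e fx fb_nn by simp
        ultimately show ?thesis using 3 by (auto simp: G_def)
      next
        case 4
        have "0 \<le> (1+e)*f x * (indicator {..a} y * fb y)" "0 \<le> f x / c * (indicator {a<..} y * fb y)"
          using e fx fb_nn c by simp_all
        thus ?thesis using 4 by simp
      qed
    qed
    have intI: "integrable lborel (\<lambda>y. indicator S y * fb y)" if "S \<in> sets borel" for S using I_int that by simp
    have intH: "integrable lborel (\<lambda>y. indicator {..x/2} y * G x y)" by (rule G_int) simp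
    have "(\<integral>y. (1-e)*f x * (indicator {..a} y * fb y) \<partial>lborel) \<le> H x"
      unfolding H_def by (intro integral_mono intH lo integrable_mult_right intI) auto
    hence L: "(1-e)*f x * I a \<le> H x" unfolding I_def by simp
    have i1: "integrable lborel (\<lambda>y. (1+e)*f x * (indicator {..a} y * fb y))"
      by (intro integrable_mult_right intI) auto
    have i2: "integrable lborel (\<lambda>y. f x / c * (indicator {a<..} y * fb y))"
      by (intro integrable_mult_right intI) auto
    have "H x \<le> (\<integral>y. (1+e)*f x * (indicator {..a} y * fb y) + f x / c * (indicator {a<..} y * fb y) \<partial>lborel)"
      unfolding H_def by (intro integral_mono intH up Bochner_Integration.integrable_add i1 i2)
    also have "\<dots> = (1+e)*f x * I a + f x / c * J a"
      unfolding I_def J_def by (subst Bochner_Integration.integral_add[OF i1 i2]) simp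
    finally have U: "H x \<le> (1+e)*f x * I a + f x / c * J a" .
    have Ia: "I a = q - J a" using IJ[of a] by simp
    have ce1: "e * c1 \<le> e" using c1 e by (intro mult_left_le) auto
    have ce2: "e * c1 \<le> e * c" using c1 e by (intro mult_left_mono) auto
    have Ja1: "J a \<le> e" using a ce1 by linarith
    have "J a \<le> e * c" using a ce2 by linarith
    hence Ja2: "J a / c \<le> e" using c by (simp add: field_simps)
    have Ja: "J a \<le> e" "J a / c \<le> e" "J a \<ge> 0" using Ja1 Ja2 J_nn[of a] by auto
    have L': "(1-e) * I a \<le> H x / f x" using L fx by (simp add: field_simps)
    have U': "H x / f x \<le> (1+e) * I a + J a / c" using U fx by (simp add: field_simps)
    have "(1-e) * I a \<ge> q - 2*e"
    proof -
      have "(1-e) * I a = I a - e * I a" by (simp add: algebra_simps)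
      moreover have "e * I a \<le> e" using e I_nn[of a] Ia Ja q_le1 by (intro mult_left_le) auto
      ultimately show ?thesis using Ia Ja by linarith
    qed
    moreover have "(1+e) * I a + J a / c \<le> q + 2*e"
    proof -
      have "(1+e) * I a = I a + e * I a" by (simp add: algebra_simps)
      moreover have "e * I a \<le> e" using e I_nn[of a] Ia Ja q_le1 by (intro mult_left_le) auto
      ultimately show ?thesis using Ia Ja by linarith
    qed
    ultimately show "\<bar>H x / f x - q\<bar> \<le> \<epsilon>" using L' U' e by (simp add: abs_le_iff)
  qed
qed

end


lemma conc_pair:
  fixes g :: "real \<Rightarrow> real"
  assumes conc: "concave_on {x0..} g" and u: "x0 \<le> u" "u < y" "y \<le> x/2"
  shows "g u + g (x - u) \<le> g y + g (x - y)"
proof -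
  define t where "t = (y - u) / (x - 2*u)"
  have L: "x - 2*u > 0" using u by simp
  have t: "0 \<le> t" "t \<le> 1" using u L by (auto simp: t_def field_simps)
  have tt: "t * (x - 2*u) = y - u" using L by (simp add: t_def)
  have "(1-t) *\<^sub>R u + t *\<^sub>R (x-u) = u + t * (x - 2*u)" by (simp add: algebra_simps)
  hence y1: "(1-t) *\<^sub>R u + t *\<^sub>R (x-u) = y" using tt by simp
  have "(1-t) *\<^sub>R (x-u) + t *\<^sub>R u = x - u - t * (x - 2*u)" by (simp add: algebra_simps)
  hence y2: "(1-t) *\<^sub>R (x-u) + t *\<^sub>R u = x - y" using tt by simp
  have m: "u \<in> {x0..}" "x - u \<in> {x0..}" using u by auto
  have "g ((1-t) *\<^sub>R u + t *\<^sub>R (x-u)) \<ge> (1-t) * g u + t * g (x-u)"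
    by (rule concave_onD[OF conc t m])
  moreover have "g ((1-t) *\<^sub>R (x-u) + t *\<^sub>R u) \<ge> (1-t) * g (x-u) + t * g u"
    by (rule concave_onD[OF conc t m(2) m(1)])
  ultimately show ?thesis unfolding y1 y2 by (simp add: algebra_simps)
qed

lemma prod_bound:
  fixes f :: "real \<Rightarrow> real"
  assumes pos: "\<forall>x\<ge>x0. f x > 0" and conc: "concave_on {x0..} (\<lambda>x. - ln (f x))"
    and u: "x0 \<le> u" "u < y" "y \<le> x/2"
  shows "f y * f (x - y) \<le> f u * f (x - u)"
proof -
  have p: "f y > 0" "f (x-y) > 0" "f u > 0" "f (x-u) > 0" using pos u by auto
  have "- ln (f u) + - ln (f (x - u)) \<le> - ln (f y) + - ln (f (x - y))"
    using conc_pair[OF conc u] by simp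
  hence "ln (f y * f (x - y)) \<le> ln (f u * f (x - u))" using p by (simp add: ln_mult)
  thus ?thesis using p by simp
qed



context sac_setup begin

lemma H_lim_ii:
  fixes h :: "real \<Rightarrow> real"
  assumes pos: "\<forall>x\<ge>x0. f x > 0" and conc: "concave_on {x0..} (\<lambda>x. - ln (f x))"
    and hlim: "filterlim h at_top at_top"
    and unif: "\<forall>\<epsilon>>0. \<forall>\<^sub>F x in at_top. \<forall>t. \<bar>t\<bar> \<le> h x \<longrightarrow> \<bar>f (x + t) / f x - 1\<bar> \<le> \<epsilon>"
    and xlim: "((\<lambda>x. x * exp (- (- ln (f (h x))))) \<longlongrightarrow> 0) at_top"
  shows "((\<lambda>x. H x / f x) \<longlongrightarrow> q) at_top"
proof (rule tendsto_by_eps)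
  fix \<epsilon> :: real assume ep: "\<epsilon> > 0"
  define e where "e = min (1/2) (\<epsilon>/3)"
  have e: "e > 0" "e \<le> 1/2" "3*e \<le> \<epsilon>" using ep by (auto simp: e_def)
  obtain a where a: "a \<ge> xh" "J a \<le> e" using tail_small[of e] e by auto
  have a0: "a \<ge> 0" using a xh by simp
  have E1: "\<forall>\<^sub>F x in at_top. f x > 0 \<and> (\<forall>t. \<bar>t\<bar> \<le> h x \<longrightarrow> (1-e)*f x \<le> f (x+t) \<and> f (x+t) \<le> (1+e)*f x)"
    using lt unif e(1) unfolding long_tailed_density_def
  proof -
    have p: "\<forall>\<^sub>F x in at_top. f x > 0" using lt unfolding long_tailed_density_def by auto
    have r: "\<forall>\<^sub>F x in at_top. \<forall>t. \<bar>t\<bar> \<le> h x \<longrightarrow> \<bar>f (x + t) / f x - 1\<bar> \<le> e" using unif e(1) by auto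
    from p r show ?thesis
    proof eventually_elim
      case (elim x)
      have "(1-e)*f x \<le> f (x+t) \<and> f (x+t) \<le> (1+e)*f x" if "\<bar>t\<bar> \<le> h x" for t
      proof -
        have "\<bar>f (x + t) / f x - 1\<bar> \<le> e" using elim that by auto
        hence "1 - e \<le> f (x+t) / f x" "f (x+t)/f x \<le> 1 + e" by auto
        thus ?thesis using elim(1) by (auto simp: field_simps)
      qed
      thus ?case using elim by auto
    qed
  qed
  have E2: "\<forall>\<^sub>F x in at_top. h x \<ge> max x0 a"
    using hlim unfolding filterlim_at_top by blast
  have E3: "\<forall>\<^sub>F x in at_top. dist (x * exp (- (- ln (f (h x))))) 0 < e"
    using tendstoD[OF xlim e(1)] .
  have E4: "\<forall>\<^sub>F x in at_top. x \<ge> max 1 (2*a)" by (rule eventually_ge_at_top)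
  show "\<forall>\<^sub>F x in at_top. \<bar>H x / f x - q\<bar> \<le> \<epsilon>"
    using E1 E2 E3 E4
  proof eventually_elim
    case (elim x)
    have fx: "f x > 0" using elim by auto
    have ft: "\<And>t. \<bar>t\<bar> \<le> h x \<Longrightarrow> (1-e)*f x \<le> f (x+t) \<and> f (x+t) \<le> (1+e)*f x" using elim by auto
    have hx: "h x \<ge> x0" "h x \<ge> a" "h x \<ge> xh" using elim a by auto
    have x: "x \<ge> 1" "x \<ge> 2*a" using elim by auto
    have fhx: "f (h x) > 0" using pos hx by auto
    have xf: "x * f (h x) < e" using elim(3) fhx x by (simp add: dist_real_def)
    have lo: "(1-e)*f x * (indicator {..a} y * fb y) \<le> indicator {..x/2} y * G x y" for y
    proof (cases "xh \<le> y \<and> y \<le> a")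
      case True
      have "(1-e)*f x \<le> f (x + - y)" using ft[of "-y"] True hx xh by auto
      hence "(1-e)*f x \<le> fb (x - y)" using True x a by (auto simp: fb_eq)
      hence "(1-e)*f x * fb y \<le> fb (x - y) * fb y" using fb_nn by (intro mult_right_mono) auto
      thus ?thesis using True x by (auto simp: G_def)
    next
      case False
      hence "indicator {..a} y * fb y = 0" by (auto simp: fb_0 indicator_def)
      thus ?thesis using G_nn by (simp add: indicator_def)
    qed
    have up: "indicator {..x/2} y * G x y \<le> (1+e)*f x * fb y + ((1+e)*f x * f (h x)) * indicator {0..x} y" for y
    proof -
      have nn1: "0 \<le> (1+e)*f x * fb y" using e fx fb_nn by simp
      have nn2: "0 \<le> ((1+e)*f x * f (h x)) * indicator {0..x} y" using e fx fhx by simp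
      consider "y < xh" | "xh \<le> y" "y \<le> h x" "y \<le> x/2" | "h x < y" "y \<le> x/2" | "y > x/2" by linarith
      thus ?thesis
      proof cases
        case 1 thus ?thesis using nn1 nn2 by (simp add: G_def fb_0)
      next
        case 2
        have "f (x + - y) \<le> (1+e)*f x" using ft[of "-y"] 2 xh by auto
        hence "fb (x - y) \<le> (1+e)*f x" using 2 x xh by (auto simp: fb_eq)
        hence "fb (x - y) * fb y \<le> (1+e)*f x * fb y" using fb_nn by (intro mult_right_mono) auto
        thus ?thesis using 2 nn2 by (auto simp: G_def)
      next
        case 3
        have "f y * f (x - y) \<le> f (h x) * f (x - h x)"
          by (rule prod_bound[OF pos conc]) (use hx 3 in auto)
        also have "f (x - h x) \<le> (1+e) * f x" using ft[of "- h x"] hx xh by auto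
        hence "f (h x) * f (x - h x) \<le> f (h x) * ((1+e) * f x)" using fhx by (intro mult_left_mono) auto
        finally have "f y * f (x - y) \<le> (1+e)*f x * f (h x)" by (simp add: mult_ac)
        moreover have "G x y = f y * f (x - y)" using 3 hx x by (auto simp: G_def fb_eq)
        moreover have "indicator {0..x} y = (1::real)" using 3 hx xh x by (auto simp: indicator_def)
        ultimately show ?thesis using 3 nn1 by simp
      next
        case 4
        thus ?thesis using nn1 nn2 by simp
      qed
    qed
    have intI: "integrable lborel (\<lambda>y. indicator S y * fb y)" if "S \<in> sets borel" for S using I_int that by simp
    have intH: "integrable lborel (\<lambda>y. indicator {..x/2} y * G x y)" by (rule G_int) simp
    have intInd: "integrable lborel (indicator {0..x} :: real \<Rightarrow> real)"
      by (simp add: integrable_indicator_iff emeasure_lborel_Icc_eq)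
    have "(\<integral>y. (1-e)*f x * (indicator {..a} y * fb y) \<partial>lborel) \<le> H x"
      unfolding H_def by (intro integral_mono intH lo integrable_mult_right intI) auto
    hence L: "(1-e)*f x * I a \<le> H x" unfolding I_def by simp
    have i1: "integrable lborel (\<lambda>y. (1+e)*f x * fb y)" using fb_int by simp
    have i2: "integrable lborel (\<lambda>y. ((1+e)*f x * f (h x)) * indicator {0..x} y)"
      using intInd by simp
    have "H x \<le> (\<integral>y. (1+e)*f x * fb y + ((1+e)*f x * f (h x)) * indicator {0..x} y \<partial>lborel)"
      unfolding H_def by (intro integral_mono intH up Bochner_Integration.integrable_add i1 i2)
    also have "\<dots> = (1+e)*f x * q + ((1+e)*f x * f (h x)) * x"
      unfolding q_def using x by (subst Bochner_Integration.integral_add[OF i1 i2]) simp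
    finally have U: "H x \<le> (1+e)*f x * q + ((1+e)*f x * f (h x)) * x" .
    have Ia: "I a = q - J a" using IJ[of a] by simp
    have L': "(1-e) * I a \<le> H x / f x" using L fx by (simp add: field_simps)
    have U': "H x / f x \<le> (1+e) * q + (1+e) * (x * f (h x))" using U fx by (simp add: field_simps)
    have "(1-e) * I a \<ge> q - 2*e"
    proof -
      have "(1-e) * I a = I a - e * I a" by (simp add: algebra_simps)
      moreover have "e * I a \<le> e" using e I_nn[of a] Ia J_nn[of a] q_le1 by (intro mult_left_le) auto
      ultimately show ?thesis using Ia a by linarith
    qed
    moreover have "(1+e) * q + (1+e) * (x * f (h x)) \<le> q + 3*e"
    proof -
      have "(1+e) * q = q + e * q" by (simp add: algebra_simps)
      moreover have "e * q \<le> e" using e q_nn q_le1 by (intro mult_left_le) auto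
      moreover have "(1+e) * (x * f (h x)) \<le> (1+e) * e" using xf e by (intro mult_left_mono) auto
      moreover have "(1+e) * e \<le> 2 * e" using e by (simp add: algebra_simps)
      ultimately show ?thesis by linarith
    qed
    ultimately show "\<bar>H x / f x - q\<bar> \<le> \<epsilon>" using L' U' e by (simp add: abs_le_iff)
  qed
qed

end


context sac_setup begin
lemma main:
  assumes "((\<lambda>x. H x / f x) \<longlongrightarrow> q) at_top"
  shows "S_ac F f xh"
proof -
  have eq: "(2 * A x + B x) / (2 * f x) = A x / f x + (B x / f x) / 2" for x
    by (simp add: add_divide_distrib)
  have "((\<lambda>x. A x / f x + (B x / f x) / 2) \<longlongrightarrow> p0 + (2*q)/2) at_top"
    by (intro tendsto_intros A_lim B_lim assms) simp
  hence "((\<lambda>x. (2 * A x + B x) / (2 * f x)) \<longlongrightarrow> 1) at_top"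
    unfolding eq using p0q by simp
  hence "(\<lambda>x. 2 * A x + B x) \<sim>[at_top] (\<lambda>x. 2 * f x)" by (rule asymp_equivI')
  thus ?thesis unfolding S_ac_def A_def B_def using lt by simp
qed
end

theorem proposition11:
  fixes F :: "real measure" and f :: "real \<Rightarrow> real" and xh :: real
  assumes "distribution_on_nonneg F"
    and "0 \<le> xh"
    and "has_density_on F f xh"
    and "long_tailed_density f xh"
    and "(\<exists>c>0. \<forall>\<^sub>F x in at_top. \<forall>y\<in>{x<..2 * x}. f y \<ge> c * f x)
         \<or> (\<exists>x0 h :: real \<Rightarrow> real.
               (\<forall>x\<ge>x0. f x > 0) \<and>
               concave_on {x0..} (\<lambda>x. - ln (f x)) \<and>
               filterlim h at_top at_top \<and>
               (\<forall>\<epsilon>>0. \<forall>\<^sub>F x in at_top. \<forall>t. \<bar>t\<bar> \<le> h x \<longrightarrow> \<bar>f (x + t) / f x - 1\<bar> \<le> \<epsilon>) \<and>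
               ((\<lambda>x. x * exp (- (- ln (f (h x))))) \<longlongrightarrow> 0) at_top)"
  shows "S_ac F f xh"
proof -
  interpret sac_setup F f xh using assms(1-4) by unfold_locales
  from assms(5) show ?thesis
  proof
    assume "\<exists>c>0. \<forall>\<^sub>F x in at_top. \<forall>y\<in>{x<..2 * x}. f y \<ge> c * f x"
    then obtain c where "c > 0" "\<forall>\<^sub>F x in at_top. \<forall>y\<in>{x<..2 * x}. f y \<ge> c * f x" by auto
    from H_lim_i[OF this] show ?thesis by (rule main)
  next
    assume "\<exists>x0 h :: real \<Rightarrow> real.
               (\<forall>x\<ge>x0. f x > 0) \<and>
               concave_on {x0..} (\<lambda>x. - ln (f x)) \<and>
               filterlim h at_top at_top \<and>
               (\<forall>\<epsilon>>0. \<forall>\<^sub>F x in at_top. \<forall>t. \<bar>t\<bar> \<le> h x \<longrightarrow> \<bar>f (x + t) / f x - 1\<bar> \<le> \<epsilon>) \<and>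
               ((\<lambda>x. x * exp (- (- ln (f (h x))))) \<longlongrightarrow> 0) at_top"
    then obtain x0 and h :: "real \<Rightarrow> real" where
      "\<forall>x\<ge>x0. f x > 0" "concave_on {x0..} (\<lambda>x. - ln (f x))" "filterlim h at_top at_top"
      "\<forall>\<epsilon>>0. \<forall>\<^sub>F x in at_top. \<forall>t. \<bar>t\<bar> \<le> h x \<longrightarrow> \<bar>f (x + t) / f x - 1\<bar> \<le> \<epsilon>"
      "((\<lambda>x. x * exp (- (- ln (f (h x))))) \<longlongrightarrow> 0) at_top" by blast
    from H_lim_ii[OF this] show ?thesis by (rule main)
  qed
qed


end
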